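(* Let $\langle A,f,g\rangle$ be a betweenness algebra and $a,b,c\in A$ with $0\notin\{a,b,c\}$ and $g(a,b)=1$. Then: (1) $|A|=2$ or $a\cdot b=0$; (2) $a$ and $b$ are atoms of $A$; (3) if $g(a,c)=1$, then $b=c$.
   Context: A PS-algebra is $\langle A,f,g\rangle$ where $A$ is a Boolean algebra with at least two elements (operations $+,\cdot,-,0,1$) and $f,g\colon A^2\to A$ satisfy: $f(x,y)=0$ whenever $x=0$ or $y=0$; $f$ is additive in each argument; $g(x,y)=1$ whenever $x=0$ or $y=0$; $g$ is co-additive in each argument ($g(x+x',y)=g(x,y)\cdot g(x',y)$, $g(x,y+y')=g(x,y)\cdot g(x,y')$). A betweenness algebra is a PS-algebra satisfying for all $x,y,z$: (ABT0) $x\leq f(x,x)$; (ABT1$_f$) $f(x,y)\leq f(y,x)$; (ABT1$_g$) $g(x,y)\leq g(y,x)$; (ABT2) $y\cdot f(x,z)\leq f(x\cdot f(x,y),z)$; (ABT3) $f(x,g(x,-y)\cdot y)\leq y$; (wMIA) if $x\neq0$ and $y\neq0$ then $g(x,y)\leq f(x,y)$. *)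

theory Defs
  imports Main
begin

text \<open>The Boolean algebra A is the carrier (UNIV) of a type of class boolean_algebra:
  + is sup, the product is inf, - is uminus, 0 is bot, 1 is top.\<close>

definition PS_algebra :: "('a::boolean_algebra \<Rightarrow> 'a \<Rightarrow> 'a) \<Rightarrow> ('a \<Rightarrow> 'a \<Rightarrow> 'a) \<Rightarrow> bool" where
  "PS_algebra f g \<longleftrightarrow>
     (bot::'a) \<noteq> top \<and>
     (\<forall>x y. (x = bot \<or> y = bot) \<longrightarrow> f x y = bot) \<and>
     (\<forall>x x' y. f (sup x x') y = sup (f x y) (f x' y)) \<and>
     (\<forall>x y y'. f x (sup y y') = sup (f x y) (f x y')) \<and>
     (\<forall>x y. (x = bot \<or> y = bot) \<longrightarrow> g x y = top) \<and>
     (\<forall>x x' y. g (sup x x') y = inf (g x y) (g x' y)) \<and>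
     (\<forall>x y y'. g x (sup y y') = inf (g x y) (g x y'))"

definition betweenness_algebra :: "('a::boolean_algebra \<Rightarrow> 'a \<Rightarrow> 'a) \<Rightarrow> ('a \<Rightarrow> 'a \<Rightarrow> 'a) \<Rightarrow> bool" where
  "betweenness_algebra f g \<longleftrightarrow>
     PS_algebra f g \<and>
     (\<forall>x. x \<le> f x x) \<and>
     (\<forall>x y. f x y \<le> f y x) \<and>
     (\<forall>x y. g x y \<le> g y x) \<and>
     (\<forall>x y z. inf y (f x z) \<le> f (inf x (f x y)) z) \<and>
     (\<forall>x y. f x (inf (g x (- y)) y) \<le> y) \<and>
     (\<forall>x y. x \<noteq> bot \<longrightarrow> y \<noteq> bot \<longrightarrow> g x y \<le> f x y)"

definition atom :: "'a::boolean_algebra \<Rightarrow> bool" where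
  "atom a \<longleftrightarrow> a \<noteq> bot \<and> (\<forall>x. x \<le> a \<longrightarrow> x = bot \<or> x = a)"

end

theory Submission
  imports Defs
begin

lemma BA1:
  fixes f g :: "'a::boolean_algebra \<Rightarrow> 'a \<Rightarrow> 'a"
  assumes "betweenness_algebra f g"
  shows "(bot::'a) \<noteq> top"
  using assms unfolding betweenness_algebra_def PS_algebra_def by (elim conjE) (simp; fail | blast)

lemma BA2:
  fixes f g :: "'a::boolean_algebra \<Rightarrow> 'a \<Rightarrow> 'a"
  assumes "betweenness_algebra f g"
  shows "x = bot \<or> y = bot \<Longrightarrow> f x y = bot"
  using assms unfolding betweenness_algebra_def PS_algebra_def by (elim conjE) (simp; fail | blast)

lemma BA3:
  fixes f g :: "'a::boolean_algebra \<Rightarrow> 'a \<Rightarrow> 'a"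
  assumes "betweenness_algebra f g"
  shows "f x (sup y y') = sup (f x y) (f x y')"
  using assms unfolding betweenness_algebra_def PS_algebra_def by (elim conjE) (simp; fail | blast)

lemma BA4:
  fixes f g :: "'a::boolean_algebra \<Rightarrow> 'a \<Rightarrow> 'a"
  assumes "betweenness_algebra f g"
  shows "g x (sup y y') = inf (g x y) (g x y')"
  using assms unfolding betweenness_algebra_def PS_algebra_def by (elim conjE) (simp; fail | blast)

lemma BA5:
  fixes f g :: "'a::boolean_algebra \<Rightarrow> 'a \<Rightarrow> 'a"
  assumes "betweenness_algebra f g"
  shows "g x y \<le> g y x"
  using assms unfolding betweenness_algebra_def PS_algebra_def by (elim conjE) (simp; fail | blast)

lemma BA6:
  fixes f g :: "'a::boolean_algebra \<Rightarrow> 'a \<Rightarrow> 'a"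
  assumes "betweenness_algebra f g"
  shows "inf y (f x z) \<le> f (inf x (f x y)) z"
  using assms unfolding betweenness_algebra_def PS_algebra_def by (elim conjE) (simp; fail | blast)

lemma BA7:
  fixes f g :: "'a::boolean_algebra \<Rightarrow> 'a \<Rightarrow> 'a"
  assumes "betweenness_algebra f g"
  shows "f x (inf (g x (- y)) y) \<le> y"
  using assms unfolding betweenness_algebra_def PS_algebra_def by (elim conjE) (simp; fail | blast)

lemma BA8:
  fixes f g :: "'a::boolean_algebra \<Rightarrow> 'a \<Rightarrow> 'a"
  assumes "betweenness_algebra f g"
  shows "x \<noteq> bot \<Longrightarrow> y \<noteq> bot \<Longrightarrow> g x y \<le> f x y"
  using assms unfolding betweenness_algebra_def PS_algebra_def by (elim conjE) (simp; fail | blast)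

lemma f_mono2:
  fixes f :: "'a::boolean_algebra \<Rightarrow> 'a \<Rightarrow> 'a"
  assumes "betweenness_algebra f g" and "y \<le> y'"
  shows "f x y \<le> f x y'"
proof -
  have "f x y' = f x (sup y y')" using sup_absorb2[OF assms(2)] by simp
  also have "\<dots> = sup (f x y) (f x y')" using BA3[OF assms(1)] by simp
  finally show ?thesis by (simp add: le_iff_sup sup_commute)
qed

lemma g_anti2:
  fixes g :: "'a::boolean_algebra \<Rightarrow> 'a \<Rightarrow> 'a"
  assumes "betweenness_algebra f g" and "y \<le> y'"
  shows "g x y' \<le> g x y"
proof -
  have "g x y' = g x (sup y y')" using sup_absorb2[OF assms(2)] by simp
  also have "\<dots> = inf (g x y) (g x y')" using BA4[OF assms(1)] by simp
  finally show ?thesis by (simp add: le_iff_inf inf_commute)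
qed

lemma atom_lemma:
  fixes f g :: "'a::boolean_algebra \<Rightarrow> 'a \<Rightarrow> 'a"
  assumes B: "betweenness_algebra f g"
    and a0: "a \<noteq> bot" and "b \<noteq> bot" and gab: "g a b = top"
  shows "atom b"
  unfolding atom_def
proof (intro conjI allI impI)
  show "b \<noteq> bot" by fact
  fix y assume yb: "y \<le> b"
  show "y = bot \<or> y = b"
  proof (cases "y = bot")
    case True then show ?thesis by simp
  next
    case False
    note y0 = this
    define Y where "Y = sup y (- b)"
    have "- Y \<le> b" unfolding Y_def by simp
    hence "top \<le> g a (- Y)" using g_anti2[OF B, of "-Y" b a] gab by simp
    hence "g a (- Y) = top" by (simp add: top_unique)
    hence "f a Y \<le> Y" using BA7[OF B, of a Y] by simp
    moreover have "top \<le> g a y" using g_anti2[OF B yb, of a] gab by simp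
    hence "top \<le> f a y" using BA8[OF B a0 y0] by simp
    moreover have "f a y \<le> f a Y" using f_mono2[OF B] unfolding Y_def by simp
    ultimately have "Y = top" by (simp add: top_unique)
    hence "- Y = bot" by simp
    hence "inf b (- y) = bot" unfolding Y_def by (simp add: inf_commute)
    hence "b \<le> y" by (simp add: inf_shunt)
    thus ?thesis using yb by simp
  qed
qed

theorem theorem29:
  fixes f g :: "'a::boolean_algebra \<Rightarrow> 'a \<Rightarrow> 'a" and a b c :: 'a
  assumes "betweenness_algebra f g"
    and "a \<noteq> bot" and "b \<noteq> bot" and "c \<noteq> bot"
    and "g a b = top"
  shows "(card (UNIV :: 'a set) = 2 \<or> inf a b = bot)
    \<and> atom a \<and> atom b
    \<and> (g a c = top \<longrightarrow> b = c)"
proof -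
  note B = assms(1)
  have "top \<le> g b a" using BA5[OF B, of a b] assms(5) by simp
  hence gba: "g b a = top" by (simp add: top_unique)
  have ab: "atom b" using atom_lemma[OF B assms(2,3,5)] .
  have aa: "atom a" using atom_lemma[OF B assms(3,2) gba] .
  have part3: "g a c = top \<longrightarrow> b = c"
  proof
    assume gac: "g a c = top"
    have "g a (sup b c) = top" using BA4[OF B, of a b c] assms(5) gac by simp
    moreover have "sup b c \<noteq> bot" using assms(3) by simp
    ultimately have at: "atom (sup b c)" using atom_lemma[OF B assms(2)] by blast
    have "b = sup b c" using at assms(3) sup_ge1[of b c] unfolding atom_def by blast
    moreover have "c = sup b c" using at assms(4) sup_ge2[of c b] unfolding atom_def by blast
    ultimately show "b = c" by simp
  qed
  have part1: "card (UNIV :: 'a set) = 2 \<or> inf a b = bot"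
  proof (rule disjCI)
    assume nab: "inf a b \<noteq> bot"
    have "inf a b = a" using aa nab inf_le1[of a b] unfolding atom_def by blast
    moreover have "inf a b = b" using ab nab inf_le2[of a b] unfolding atom_def by blast
    ultimately have eq: "a = b" by simp
    have gaa: "g a a = top" using assms(5) eq by simp
    have "f a (inf (g a (- (- a))) (- a)) \<le> - a" using BA7[OF B, of a "- a"] .
    hence "f a (- a) \<le> - a" using gaa by simp
    hence "a \<le> - f a (- a)" using compl_le_swap1 by blast
    hence "inf a (f a (- a)) = bot" by (simp add: inf_shunt)
    hence f0: "f (inf a (f a (- a))) a = bot" using BA2[OF B] by simp
    have "top \<le> f a a" using BA8[OF B assms(2) assms(2)] gaa by simp
    hence faa: "f a a = top" by (simp add: top_unique)
    have "inf (- a) (f a a) \<le> f (inf a (f a (- a))) a" using BA6[OF B] .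
    hence "- a = bot" using f0 faa by (simp add: bot_unique)
    hence a1: "a = top" by (metis double_compl compl_bot_eq)
    have bt: "(bot::'a) \<noteq> top" using BA1[OF B] .
    have U: "UNIV = {bot, top::'a}" using aa a1 unfolding atom_def by auto
    have "card {bot, top::'a} = 2" using bt by simp
    thus "card (UNIV :: 'a set) = 2" unfolding U .
  qed
  show ?thesis using part1 part3 aa ab by blast
qed

end
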